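(* Let $h:\mathbb{R}^k\times\mathbb{R}^k\to[0,\infty)$ be a volume-regular generalized distance function, with associated functions $\Phi$, $\delta_t$, $\delta$ and constants as in the context, and let $\xi\in\mathbb{R}^k$ be a point at which the comparability condition of volume-regularity holds, i.e. there are $c,C>0$ and $\epsilon>0$ with $c\,\delta(x,\xi)\le \delta_t(x,\xi)\le C\,\delta(x,\xi)$ for almost every $x$ and all $0<t<\epsilon$. Let $X_1,X_2,X_3$ be i.i.d. random vectors in $\mathbb{R}^k$ with Lebesgue density $f$, and $Y_1,Y_2,Y_3$ i.i.d. random vectors in $\mathbb{R}^k$ with Lebesgue density $g$, where $X_i$ and $Y_j$ are independent for all $i,j$. Assume that $f$ and $g$ are Lebesgue differentiable with respect to $h$ at almost every point of $\mathbb{R}^k$ and have uniformly bounded centered oscillations with respect to $h$. Assume further that $f\cdot\delta(\cdot,\xi)$, $g\cdot\delta(\cdot,\xi)$, $f^2\cdot\delta(\cdot,\xi)$, $g^2\cdot\delta(\cdot,\xi)\in L^1(\mathbb{R}^k)$. Then $$f=g \text{ (a.e.)}\quad\Longleftrightarrow\quad h(X_1,X_2)\overset{\mathcal{D}}{=}h(Y_1,Y_2)\overset{\mathcal{D}}{=}h(X_3,Y_3).$$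
   Context: A generalized distance function is a function $h:\mathbb{R}^k\times\mathbb{R}^k\to[0,\infty)$ with $h(x,y)=0\iff x=y$ (no symmetry or triangle inequality assumed). The $h$-ball is $B_t^{(h)}(x)=\{y\in\mathbb{R}^k: h(x,y)<t\}$ and $\Phi(x,t)=\mu(B_t^{(h)}(x))$, where $\mu$ is Lebesgue measure. $h$ is called volume-regular if: for some $\epsilon>0$, $\Phi$ is well defined on $\mathbb{R}^k\times[0,\epsilon)$ (small balls are measurable); $\lim_{t\to0^+}\Phi(x,t)=0$; for some $\epsilon>0$ and all $0<t<\epsilon$, $0<\Phi(x,t)<\infty$ for almost every $x$; and there exist at least one point $y\in\mathbb{R}^k$, an $\epsilon>0$, a function $\delta:\mathbb{R}^k\times\mathbb{R}^k\to(0,\infty)$ and constants $c,C>0$ such that for almost every $x$ and all $0<t<\epsilon$, $c\,\delta(x,y)\le\delta_t(x,y)\le C\,\delta(x,y)$, where $\delta_t(x,y):=\Phi(x,t)/\Phi(y,t)$. A function $f\in L^1_{loc}(\mathbb{R}^k)$ is Lebesgue differentiable with respect to $h$ at $x$ if $\lim_{t\to0^+}\frac{1}{\Phi(x,t)}\int_{B_t^{(h)}(x)}|f(y)-f(x)|\,dy=0$. The centered oscillation of $f$ at $x$ on scale $\epsilon$ is $A_f^{(h)}(x,\epsilon)=\sup_{0<t<\epsilon}\frac{1}{\Phi(x,t)}\int_{B_t^{(h)}(x)}|f(y)-f(x)|\,dy$; it is uniformly bounded (on scale $\epsilon$) if there is $C>0$ with $A_f^{(h)}(x,\epsilon)<C$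 for almost every $x$, for some $\epsilon>0$. *)

theory Defs
  imports "HOL-Probability.Probability"
begin

definition gen_dist :: "('a::euclidean_space \<Rightarrow> 'a \<Rightarrow> real) \<Rightarrow> bool" where
  "gen_dist h \<longleftrightarrow> (\<forall>x y. 0 \<le> h x y \<and> (h x y = 0 \<longleftrightarrow> x = y))"

definition hball :: "('a::euclidean_space \<Rightarrow> 'a \<Rightarrow> real) \<Rightarrow> 'a \<Rightarrow> real \<Rightarrow> 'a set" where
  "hball h x t = {y. h x y < t}"

definition Phi :: "('a::euclidean_space \<Rightarrow> 'a \<Rightarrow> real) \<Rightarrow> 'a \<Rightarrow> real \<Rightarrow> ennreal" where
  "Phi h x t = emeasure lebesgue (hball h x t)"

definition delta_t :: "('a::euclidean_space \<Rightarrow> 'a \<Rightarrow> real) \<Rightarrow> real \<Rightarrow> 'a \<Rightarrow> 'a \<Rightarrow> real" where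
  "delta_t h t x y = enn2real (Phi h x t) / enn2real (Phi h y t)"

definition vr_comparable ::
  "('a::euclidean_space \<Rightarrow> 'a \<Rightarrow> real) \<Rightarrow> 'a \<Rightarrow> ('a \<Rightarrow> 'a \<Rightarrow> real) \<Rightarrow> bool" where
  "vr_comparable h y \<delta> \<longleftrightarrow> (\<forall>a b. 0 < \<delta> a b) \<and>
     (\<exists>\<epsilon>>0. \<exists>c>0. \<exists>C>0. AE x in lebesgue. \<forall>t. 0 < t \<and> t < \<epsilon> \<longrightarrow>
        c * \<delta> x y \<le> delta_t h t x y \<and> delta_t h t x y \<le> C * \<delta> x y)"

definition volume_regular :: "('a::euclidean_space \<Rightarrow> 'a \<Rightarrow> real) \<Rightarrow> bool" where
  "volume_regular h \<longleftrightarrow>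
     gen_dist h \<and>
     (\<exists>\<epsilon>>0. \<forall>x t. 0 \<le> t \<and> t < \<epsilon> \<longrightarrow> hball h x t \<in> sets lebesgue) \<and>
     (\<forall>x. ((\<lambda>t. Phi h x t) \<longlongrightarrow> 0) (at_right 0)) \<and>
     (\<exists>\<epsilon>>0. \<forall>t. 0 < t \<and> t < \<epsilon> \<longrightarrow> (AE x in lebesgue. 0 < Phi h x t \<and> Phi h x t < \<infinity>)) \<and>
     (\<exists>y \<delta>. vr_comparable h y \<delta>)"

definition locally_integrable :: "('a::euclidean_space \<Rightarrow> real) \<Rightarrow> bool" where
  "locally_integrable f \<longleftrightarrow> (\<forall>K. compact K \<longrightarrow> set_integrable lebesgue K f)"

definition ball_mean_dev ::
  "('a::euclidean_space \<Rightarrow> 'a \<Rightarrow> real) \<Rightarrow> ('a \<Rightarrow> real) \<Rightarrow> 'a \<Rightarrow> real \<Rightarrow> ennreal" where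
  "ball_mean_dev h f x t =
     (\<integral>\<^sup>+ y \<in> hball h x t. ennreal \<bar>f y - f x\<bar> \<partial>lebesgue) / Phi h x t"

definition lebesgue_differentiable_at ::
  "('a::euclidean_space \<Rightarrow> 'a \<Rightarrow> real) \<Rightarrow> ('a \<Rightarrow> real) \<Rightarrow> 'a \<Rightarrow> bool" where
  "lebesgue_differentiable_at h f x \<longleftrightarrow>
     locally_integrable f \<and> ((\<lambda>t. ball_mean_dev h f x t) \<longlongrightarrow> 0) (at_right 0)"

definition centered_osc ::
  "('a::euclidean_space \<Rightarrow> 'a \<Rightarrow> real) \<Rightarrow> ('a \<Rightarrow> real) \<Rightarrow> 'a \<Rightarrow> real \<Rightarrow> ennreal" where
  "centered_osc h f x \<epsilon> = (SUP t \<in> {0<..<\<epsilon>}. ball_mean_dev h f x t)"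

definition osc_uniformly_bounded ::
  "('a::euclidean_space \<Rightarrow> 'a \<Rightarrow> real) \<Rightarrow> ('a \<Rightarrow> real) \<Rightarrow> bool" where
  "osc_uniformly_bounded h f \<longleftrightarrow>
     (\<exists>\<epsilon>>0. \<exists>C>0. AE x in lebesgue. centered_osc h f x \<epsilon> < ennreal C)"

end

theory Submission
  imports Defs
begin


lemma AE_completion_rev:
  assumes "AE x in completion M. P x" shows "AE x in M. P x"
proof -
  from assms obtain N where N: "N \<in> null_sets (completion M)" "{x\<in>space (completion M). \<not> P x} \<subseteq> N"
    unfolding eventually_ae_filter by auto
  then obtain N' where "N' \<in> null_sets M" "N \<subseteq> N'" using null_sets_completion_iff2 by blast
  with N show ?thesis unfolding eventually_ae_filter by (intro bexI[of _ N']) auto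
qed

lemma hmeas_l:
  assumes "(\<lambda>(x, y). h x y) \<in> borel_measurable (borel \<Otimes>\<^sub>M borel)"
  shows "(\<lambda>(x, y). h x y) \<in> borel_measurable (lborel \<Otimes>\<^sub>M (lborel::'a::euclidean_space measure))"
  using assms by (subst measurable_cong_sets[OF sets_pair_measure_cong[OF sets_lborel sets_lborel] refl])

lemma indep_pair:
  assumes "prob_space M" "prob_space.indep_vars M (\<lambda>_. borel) X I" "i \<in> I" "j \<in> I" "i \<noteq> j"
  shows "prob_space.indep_var M borel (X i) borel (X j)"
proof -
  interpret prob_space M by fact
  have "indep_var (PiM {i} (\<lambda>_. borel)) (\<lambda>\<omega>. restrict (\<lambda>k. X k \<omega>) {i}) (PiM {j} (\<lambda>_. borel)) (\<lambda>\<omega>. restrict (\<lambda>k. X k \<omega>) {j})"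
    using assms by (intro indep_var_restrict) auto
  then have "indep_var borel ((\<lambda>f. f i) \<circ> (\<lambda>\<omega>. restrict (\<lambda>k. X k \<omega>) {i})) borel ((\<lambda>f. f j) \<circ> (\<lambda>\<omega>. restrict (\<lambda>k. X k \<omega>) {j}))"
    by (rule indep_var_compose) auto
  then show ?thesis by (simp add: comp_def)
qed

lemma joint_distr:
  fixes X Y :: "'p \<Rightarrow> 'a::euclidean_space"
  assumes "prob_space M" "distributed M lborel X (\<lambda>x. ennreal (p x))" "distributed M lborel Y (\<lambda>x. ennreal (q x))"
    "prob_space.indep_var M borel X borel Y"
  shows "distr M (lborel \<Otimes>\<^sub>M lborel) (\<lambda>\<omega>. (X \<omega>, Y \<omega>)) = density (lborel \<Otimes>\<^sub>M lborel) (\<lambda>(x,y). ennreal (p x) * ennreal (q y))"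
proof -
  interpret prob_space M by fact
  have "indep_var lborel X lborel Y" using assms(4) unfolding indep_var_eq
    by (simp add: measurable_lborel2)
  then have "distributed M (lborel \<Otimes>\<^sub>M lborel) (\<lambda>x. (X x, Y x)) (\<lambda>(x, y). ennreal (p x) * ennreal (q y))"
    using assms by (intro distributed_joint_indep) (auto intro: lborel.sigma_finite_measure_axioms)
  then show ?thesis by (simp add: distributed_distr_eq_density)
qed



definition Ib :: "('a::euclidean_space \<Rightarrow> 'a \<Rightarrow> real) \<Rightarrow> ('a \<Rightarrow> real) \<Rightarrow> real \<Rightarrow> 'a \<Rightarrow> real" where
  "Ib h q t x = enn2real (\<integral>\<^sup>+ y. ennreal (q y) * indicator (hball h x t) y \<partial>lebesgue)"

lemma hball_sets:
  assumes "(\<lambda>(x, y). h x y) \<in> borel_measurable (borel \<Otimes>\<^sub>M borel)"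
  shows "hball h x t \<in> sets lborel"
proof -
  have "(\<lambda>y. h x y) \<in> borel_measurable borel"
    using measurable_compose_Pair1[of x borel "\<lambda>(x, y). h x y" borel borel] assms by simp
  then show ?thesis unfolding hball_def by (simp add: measurable_lborel1 pred_def[symmetric]) measurable
qed

lemma meas_ball_int:
  fixes h :: "'a::euclidean_space \<Rightarrow> 'a \<Rightarrow> real" and F :: "'a \<Rightarrow> 'a \<Rightarrow> ennreal"
  assumes hm: "(\<lambda>(x, y). h x y) \<in> borel_measurable (borel \<Otimes>\<^sub>M borel)"
    and Fm: "(\<lambda>(x, y). F x y) \<in> borel_measurable (lborel \<Otimes>\<^sub>M lborel)"
  shows "(\<lambda>x. \<integral>\<^sup>+ y. F x y * indicator (hball h x t) y \<partial>lebesgue) \<in> borel_measurable lborel"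
proof -
  have hl: "(\<lambda>(x, y). h x y) \<in> borel_measurable (lborel \<Otimes>\<^sub>M lborel)" using hmeas_l[OF hm] .
  have "(\<lambda>z. F (fst z) (snd z) * indicator {z. h (fst z) (snd z) < t} z) \<in> borel_measurable (lborel \<Otimes>\<^sub>M lborel)"
  proof (intro borel_measurable_times_ennreal borel_measurable_indicator)
    show "(\<lambda>z. F (fst z) (snd z)) \<in> borel_measurable (lborel \<Otimes>\<^sub>M lborel)"
      using Fm by (simp add: case_prod_beta')
    have [measurable]: "(\<lambda>z. h (fst z) (snd z)) \<in> borel_measurable (borel \<Otimes>\<^sub>M borel)"
      using hm by (simp add: case_prod_beta')
    have "{z \<in> space (borel \<Otimes>\<^sub>M borel). h (fst z) (snd z) < t} \<in> sets (borel \<Otimes>\<^sub>M borel)"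
      by measurable
    then show "{z. h (fst z) (snd z) < t} \<in> sets (lborel \<Otimes>\<^sub>M lborel)"
      by (simp add: space_pair_measure)
  qed
  then have "(\<lambda>x. \<integral>\<^sup>+ y. F x y * indicator {z. h (fst z) (snd z) < t} (x, y) \<partial>lborel) \<in> borel_measurable lborel"
    using lborel.borel_measurable_nn_integral_fst[of "\<lambda>z. F (fst z) (snd z) * indicator {z. h (fst z) (snd z) < t} z" lborel]
    by simp
  moreover have "\<And>x. (\<integral>\<^sup>+ y. F x y * indicator (hball h x t) y \<partial>lebesgue) = (\<integral>\<^sup>+ y. F x y * indicator {z. h (fst z) (snd z) < t} (x, y) \<partial>lborel)"
    by (simp add: nn_integral_completion hball_def indicator_def)
  ultimately show ?thesis by simp
qed

lemma dens:
  fixes X :: "'p \<Rightarrow> 'a::euclidean_space"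
  assumes "prob_space M" "distributed M lborel X (\<lambda>x. ennreal (p x))" "\<And>x. 0 \<le> p x"
  shows "p \<in> borel_measurable lborel" "(\<integral>\<^sup>+x. ennreal (p x) \<partial>lborel) = 1" "integrable lborel p"
proof -
  interpret prob_space M by fact
  have m: "(\<lambda>x. ennreal (p x)) \<in> borel_measurable lborel" using assms(2) by (simp add: distributed_def)
  then have "(\<lambda>x. enn2real (ennreal (p x))) \<in> borel_measurable lborel" by measurable
  then show pm: "p \<in> borel_measurable lborel" using assms(3) by simp
  have "(\<integral>\<^sup>+x. ennreal (p x) \<partial>lborel) = emeasure (density lborel (\<lambda>x. ennreal (p x))) UNIV"
    using m by (simp add: emeasure_density)
  also have "\<dots> = emeasure (distr M lborel X) UNIV" using assms(2) by (simp add: distributed_distr_eq_density)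
  also have "\<dots> = 1"
  proof -
    interpret D: prob_space "distr M lborel X"
      using assms(2) by (intro prob_space_distr) (simp add: distributed_def)
    show ?thesis using D.emeasure_space_1 by simp
  qed
  finally show "(\<integral>\<^sup>+x. ennreal (p x) \<partial>lborel) = 1" .
  then show "integrable lborel p" using pm assms(3)
    by (intro integrableI_nonneg) auto
qed



lemma Ib_bound:
  fixes q :: "'a::euclidean_space \<Rightarrow> real"
  assumes "(\<integral>\<^sup>+x. ennreal (q x) \<partial>lborel) = 1"
  shows "(\<integral>\<^sup>+ y. ennreal (q y) * indicator (hball h x t) y \<partial>lebesgue) \<le> 1"
    "ennreal (Ib h q t x) = (\<integral>\<^sup>+ y. ennreal (q y) * indicator (hball h x t) y \<partial>lebesgue)"
    "0 \<le> Ib h q t x" "Ib h q t x \<le> 1"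
proof -
  have "(\<integral>\<^sup>+ y. ennreal (q y) * indicator (hball h x t) y \<partial>lebesgue) \<le> (\<integral>\<^sup>+ y. ennreal (q y) \<partial>lebesgue)"
    by (intro nn_integral_mono) (auto split: split_indicator)
  also have "\<dots> = 1" using assms by (simp add: nn_integral_completion)
  finally show le: "(\<integral>\<^sup>+ y. ennreal (q y) * indicator (hball h x t) y \<partial>lebesgue) \<le> 1" .
  then show "ennreal (Ib h q t x) = (\<integral>\<^sup>+ y. ennreal (q y) * indicator (hball h x t) y \<partial>lebesgue)"
    unfolding Ib_def using le_less_trans[OF le, of top] by (intro ennreal_enn2real) simp
  show "0 \<le> Ib h q t x" unfolding Ib_def by simp
  show "Ib h q t x \<le> 1" unfolding Ib_def using le
    by (metis enn2real_le_iff ennreal_1 le_numeral_extra(1) ennreal_enn2real_if ennreal_le_1)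
qed

lemma Ib_meas:
  fixes q :: "'a::euclidean_space \<Rightarrow> real"
  assumes hm: "(\<lambda>(x, y). h x y) \<in> borel_measurable (borel \<Otimes>\<^sub>M borel)" and qm: "q \<in> borel_measurable lborel"
  shows "Ib h q t \<in> borel_measurable lborel"
proof -
  have "(\<lambda>(x, y). ennreal (q y)) \<in> borel_measurable (lborel \<Otimes>\<^sub>M (lborel::'a measure))"
    using qm by measurable
  from meas_ball_int[OF hm this, of t]
  have "(\<lambda>x. \<integral>\<^sup>+ y. ennreal (q y) * indicator (hball h x t) y \<partial>lebesgue) \<in> borel_measurable lborel" by simp
  then show ?thesis unfolding Ib_def[abs_def] by measurable
qed

lemma prob_formula:
  fixes X Y :: "'p \<Rightarrow> 'a::euclidean_space" and h :: "'a \<Rightarrow> 'a \<Rightarrow> real"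
  assumes ps: "prob_space M" and X: "distributed M lborel X (\<lambda>x. ennreal (p x))"
    and Y: "distributed M lborel Y (\<lambda>x. ennreal (q x))"
    and ind: "prob_space.indep_var M borel X borel Y"
    and hm: "(\<lambda>(x, y). h x y) \<in> borel_measurable (borel \<Otimes>\<^sub>M borel)"
    and pn: "\<And>x. 0 \<le> p x" and qn: "\<And>x. 0 \<le> q x"
  shows "integrable lebesgue (\<lambda>x. p x * Ib h q t x)"
    "measure M {\<omega> \<in> space M. h (X \<omega>) (Y \<omega>) < t} = (\<integral>x. p x * Ib h q t x \<partial>lebesgue)"
proof -
  note pm = dens(1)[OF ps X pn] and p1 = dens(2)[OF ps X pn] and pint = dens(3)[OF ps X pn]
  note qm = dens(1)[OF ps Y qn] and q1 = dens(2)[OF ps Y qn]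
  have Ibm: "Ib h q t \<in> borel_measurable lborel" by (rule Ib_meas[OF hm qm])
  have im: "(\<lambda>x. p x * Ib h q t x) \<in> borel_measurable lborel" using pm Ibm by measurable
  have intl: "integrable lborel (\<lambda>x. p x * Ib h q t x)"
    using pint im
    by (rule Bochner_Integration.integrable_bound) (auto intro!: AE_I2 simp: Ib_bound[OF q1] pn mult_left_le)
  then show "integrable lebesgue (\<lambda>x. p x * Ib h q t x)"
    using im by (simp add: integrable_completion)
  define S where "S = {z::'a\<times>'a. h (fst z) (snd z) < t}"
  have [measurable]: "(\<lambda>z. h (fst z) (snd z)) \<in> borel_measurable (borel \<Otimes>\<^sub>M borel)"
    using hm by (simp add: case_prod_beta')
  have "{z \<in> space (borel \<Otimes>\<^sub>M borel). h (fst z) (snd z) < t} \<in> sets (borel \<Otimes>\<^sub>M borel)"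
    by measurable
  then have Ss: "S \<in> sets (lborel \<Otimes>\<^sub>M lborel)" by (simp add: space_pair_measure S_def)
  have Xm: "X \<in> measurable M lborel" using X by (simp add: distributed_def)
  have Ym: "Y \<in> measurable M lborel" using Y by (simp add: distributed_def)
  have XYm: "(\<lambda>\<omega>. (X \<omega>, Y \<omega>)) \<in> measurable M (lborel \<Otimes>\<^sub>M lborel)"
    using Xm Ym by (rule measurable_Pair)
  have pqm: "(\<lambda>(x, y). ennreal (p x) * ennreal (q y)) \<in> borel_measurable (lborel \<Otimes>\<^sub>M (lborel::'a measure))"
    using pm qm by measurable
  have "emeasure M {\<omega> \<in> space M. h (X \<omega>) (Y \<omega>) < t} = emeasure (distr M (lborel \<Otimes>\<^sub>M lborel) (\<lambda>\<omega>. (X \<omega>, Y \<omega>))) S"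
    using XYm Ss by (subst emeasure_distr) (auto simp: S_def vimage_def intro!: arg_cong[where f="emeasure M"])
  also have "\<dots> = emeasure (density (lborel \<Otimes>\<^sub>M lborel) (\<lambda>(x,y). ennreal (p x) * ennreal (q y))) S"
    by (simp add: joint_distr[OF ps X Y ind])
  also have "\<dots> = (\<integral>\<^sup>+ z. (\<lambda>(x,y). ennreal (p x) * ennreal (q y)) z * indicator S z \<partial>(lborel \<Otimes>\<^sub>M lborel))"
    using pqm Ss by (rule emeasure_density)
  also have "\<dots> = (\<integral>\<^sup>+ x. \<integral>\<^sup>+ y. (\<lambda>(x,y). ennreal (p x) * ennreal (q y)) (x, y) * indicator S (x, y) \<partial>lborel \<partial>lborel)"
    by (rule lborel.nn_integral_fst[symmetric], intro borel_measurable_times_ennreal borel_measurable_indicator pqm Ss)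
  also have "\<dots> = (\<integral>\<^sup>+ x. ennreal (p x) * \<integral>\<^sup>+ y. ennreal (q y) * indicator (hball h x t) y \<partial>lborel \<partial>lborel)"
  proof (intro nn_integral_cong)
    fix x
    have "(\<lambda>y. ennreal (q y) * indicator (hball h x t) y) \<in> borel_measurable lborel"
      using qm hball_sets[OF hm] by measurable
    then show "(\<integral>\<^sup>+ y. (\<lambda>(x,y). ennreal (p x) * ennreal (q y)) (x, y) * indicator S (x, y) \<partial>lborel) =
        ennreal (p x) * \<integral>\<^sup>+ y. ennreal (q y) * indicator (hball h x t) y \<partial>lborel"
      by (subst nn_integral_cmult[symmetric]) (auto simp: S_def hball_def indicator_def mult.assoc intro!: nn_integral_cong)
  qed
  also have "\<dots> = (\<integral>\<^sup>+ x. ennreal (p x * Ib h q t x) \<partial>lborel)"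
  proof (intro nn_integral_cong)
    fix x
    have "(\<integral>\<^sup>+ y. ennreal (q y) * indicator (hball h x t) y \<partial>lborel) = ennreal (Ib h q t x)"
      using Ib_bound(2)[OF q1, where h=h and x=x and t=t] by (simp add: nn_integral_completion)
    then show "ennreal (p x) * (\<integral>\<^sup>+ y. ennreal (q y) * indicator (hball h x t) y \<partial>lborel) = ennreal (p x * Ib h q t x)"
      by (simp add: ennreal_mult pn Ib_bound(3)[OF q1])
  qed
  also have "\<dots> = ennreal (\<integral> x. p x * Ib h q t x \<partial>lborel)"
    using intl by (intro nn_integral_eq_integral) (auto simp: pn Ib_bound[OF q1])
  finally have "emeasure M {\<omega> \<in> space M. h (X \<omega>) (Y \<omega>) < t} = ennreal (\<integral> x. p x * Ib h q t x \<partial>lborel)" .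
  moreover have "0 \<le> (\<integral> x. p x * Ib h q t x \<partial>lborel)"
    by (intro integral_nonneg_AE) (auto simp: pn Ib_bound[OF q1])
  ultimately have "measure M {\<omega> \<in> space M. h (X \<omega>) (Y \<omega>) < t} = (\<integral> x. p x * Ib h q t x \<partial>lborel)"
    by (simp add: measure_def)
  then show "measure M {\<omega> \<in> space M. h (X \<omega>) (Y \<omega>) < t} = (\<integral>x. p x * Ib h q t x \<partial>lebesgue)"
    using im by (simp add: integral_completion)
qed



lemma Phi_meas:
  assumes hm: "(\<lambda>(x, y). h x y) \<in> borel_measurable (borel \<Otimes>\<^sub>M borel)"
  shows "(\<lambda>x. Phi h x t) \<in> borel_measurable lborel"
proof -
  have "(\<lambda>(x, y). 1::ennreal) \<in> borel_measurable (lborel \<Otimes>\<^sub>M (lborel::'a measure))" by simp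
  from meas_ball_int[OF hm this, of t]
  have "(\<lambda>x. \<integral>\<^sup>+ y. indicator (hball h x t) y \<partial>lebesgue) \<in> borel_measurable lborel" by simp
  moreover have "\<And>x. Phi h x t = (\<integral>\<^sup>+ y. indicator (hball h x t) y \<partial>lebesgue)"
    unfolding Phi_def using hball_sets[OF hm] by (subst nn_integral_indicator) auto
  ultimately show ?thesis by simp
qed

lemma dev_bound:
  fixes f :: "'a::euclidean_space \<Rightarrow> real"
  assumes hm: "(\<lambda>(x, y). h x y) \<in> borel_measurable (borel \<Otimes>\<^sub>M borel)"
    and fm: "f \<in> borel_measurable lborel" and f1: "(\<integral>\<^sup>+x. ennreal (f x) \<partial>lborel) = 1"
    and fn: "\<And>x. 0 \<le> f x"
    and Pfin: "Phi h x t < \<infinity>"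
    and Dfin: "(\<integral>\<^sup>+ y. ennreal \<bar>f y - f x\<bar> * indicator (hball h x t) y \<partial>lebesgue) < \<infinity>"
  shows "\<bar>Ib h f t x - enn2real (Phi h x t) * f x\<bar> \<le> enn2real (\<integral>\<^sup>+ y. ennreal \<bar>f y - f x\<bar> * indicator (hball h x t) y \<partial>lebesgue)"
proof -
  define B where "B = hball h x t"
  have Bs: "B \<in> sets lborel" unfolding B_def by (rule hball_sets[OF hm])
  define a where "a = (\<integral>\<^sup>+ y. ennreal (f y) * indicator B y \<partial>lebesgue)"
  define D where "D = (\<integral>\<^sup>+ y. ennreal \<bar>f y - f x\<bar> * indicator B y \<partial>lebesgue)"
  define Q where "Q = Phi h x t"
  have fml[measurable]: "f \<in> borel_measurable lebesgue" using fm by (rule measurable_completion)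
  have Bl[measurable]: "B \<in> sets lebesgue" using Bs by simp
  have cQ: "(\<integral>\<^sup>+ y. ennreal (f x) * indicator B y \<partial>lebesgue) = ennreal (f x) * Q"
    unfolding Q_def Phi_def B_def[symmetric] using Bl by (rule nn_integral_cmult_indicator)
  have "a \<le> (\<integral>\<^sup>+ y. ennreal \<bar>f y - f x\<bar> * indicator B y + ennreal (f x) * indicator B y \<partial>lebesgue)"
    unfolding a_def by (intro nn_integral_mono) (auto split: split_indicator simp: ennreal_plus[symmetric] fn simp del: ennreal_plus intro!: ennreal_leI)
  also have "\<dots> = D + ennreal (f x) * Q"
    unfolding D_def cQ[symmetric] using fml Bl by (intro nn_integral_add) measurable
  finally have 1: "a \<le> D + ennreal (f x) * Q" .
  have "ennreal (f x) * Q \<le> (\<integral>\<^sup>+ y. ennreal (f y) * indicator B y + ennreal \<bar>f y - f x\<bar> * indicator B y \<partial>lebesgue)"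
    unfolding cQ[symmetric] by (intro nn_integral_mono) (auto split: split_indicator simp: ennreal_plus[symmetric] fn simp del: ennreal_plus intro!: ennreal_leI)
  also have "\<dots> = a + D"
    unfolding D_def a_def using fml Bl by (intro nn_integral_add) measurable
  finally have 2: "ennreal (f x) * Q \<le> a + D" .
  have aI: "a = ennreal (Ib h f t x)" unfolding a_def B_def using Ib_bound(2)[OF f1] by simp
  have Dr: "D = ennreal (enn2real D)" using Dfin unfolding D_def B_def by (simp add: ennreal_enn2real)
  have Qr: "Q = ennreal (enn2real Q)" using Pfin unfolding Q_def by (simp add: ennreal_enn2real)
  have I0: "0 \<le> Ib h f t x" using Ib_bound(3)[OF f1] .
  have "ennreal (Ib h f t x) \<le> ennreal (enn2real D + f x * enn2real Q)"
    using 1 aI Dr Qr by (metis ennreal_mult'' ennreal_plus enn2real_nonneg fn mult_nonneg_nonneg ennreal_mult enn2real_nonneg)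
  then have h1x: "Ib h f t x \<le> enn2real D + f x * enn2real Q"
    by (subst (asm) ennreal_le_iff) (auto simp: fn)
  have "ennreal (f x * enn2real Q) \<le> ennreal (Ib h f t x + enn2real D)"
    using 2 aI Dr Qr by (metis ennreal_mult'' ennreal_plus enn2real_nonneg fn I0 ennreal_mult)
  then have h2x: "f x * enn2real Q \<le> Ib h f t x + enn2real D"
    using I0 by (subst (asm) ennreal_le_iff) (auto simp: fn)
  show ?thesis using h1x h2x unfolding D_def Q_def B_def by (simp add: mult.commute abs_le_iff)
qed



lemma pw:
  fixes f :: "'a::euclidean_space \<Rightarrow> real"
  assumes hm: "(\<lambda>(x, y). h x y) \<in> borel_measurable (borel \<Otimes>\<^sub>M borel)"
    and fm: "f \<in> borel_measurable lborel" and f1: "(\<integral>\<^sup>+x. ennreal (f x) \<partial>lborel) = 1"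
    and fn: "\<And>x. 0 \<le> f x"
    and Ppos: "0 < enn2real (Phi h x t)" and bK: "ball_mean_dev h f x t < ennreal K"
  shows "\<bar>Ib h f t x - enn2real (Phi h x t) * f x\<bar> \<le> enn2real (Phi h x t) * enn2real (ball_mean_dev h f x t)"
    "enn2real (ball_mean_dev h f x t) \<le> K"
proof -
  define D where "D = (\<integral>\<^sup>+ y. ennreal \<bar>f y - f x\<bar> * indicator (hball h x t) y \<partial>lebesgue)"
  define q where "q = enn2real (Phi h x t)"
  have Pfin: "Phi h x t < \<infinity>" using Ppos by (cases "Phi h x t") auto
  then have Qq: "Phi h x t = ennreal q" unfolding q_def by (simp add: ennreal_enn2real)
  have q0: "0 < q" using Ppos q_def by simp
  have bmd: "ball_mean_dev h f x t = D / ennreal q" unfolding ball_mean_dev_def D_def Qq by simp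
  have "D \<noteq> \<infinity>"
  proof
    assume "D = \<infinity>"
    then have "ball_mean_dev h f x t = \<infinity>" unfolding bmd using q0 by (simp add: ennreal_top_divide)
    then show False using bK by simp
  qed
  then have Dfin: "D < \<infinity>" by (simp add: top.not_eq_extremum)
  define d where "d = enn2real D"
  have Dd: "D = ennreal d" using Dfin unfolding d_def by (simp add: ennreal_enn2real)
  have d0: "0 \<le> d" unfolding d_def by simp
  have bmd2: "enn2real (ball_mean_dev h f x t) = d / q" unfolding bmd Dd using q0 d0 by (simp add: divide_ennreal)
  have "\<bar>Ib h f t x - enn2real (Phi h x t) * f x\<bar> \<le> d"
    using dev_bound[OF hm fm f1 fn Pfin] Dfin unfolding D_def d_def by simp
  also have "d = q * (d / q)" using q0 by simp
  finally show "\<bar>Ib h f t x - enn2real (Phi h x t) * f x\<bar> \<le> enn2real (Phi h x t) * enn2real (ball_mean_dev h f x t)"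
    unfolding bmd2 q_def .
  show "enn2real (ball_mean_dev h f x t) \<le> K"
  proof -
    have "ennreal (d / q) < ennreal K" using bK unfolding bmd Dd using q0 d0 by (simp add: divide_ennreal)
    then show ?thesis unfolding bmd2 by (simp add: ennreal_less_iff d0 q0 less_imp_le)
  qed
qed



lemma AE_False_lebesgue: "\<not> (AE x in (lebesgue::'a::euclidean_space measure). False)"
proof
  assume "AE x in (lebesgue::'a measure). False"
  then have "AE x in (lborel::'a measure). False" by (rule AE_completion_rev)
  then obtain N where N: "N \<in> null_sets (lborel::'a measure)" "{x \<in> space lborel. \<not> False} \<subseteq> N"
    unfolding eventually_ae_filter by blast
  then have "emeasure (lborel::'a measure) UNIV \<le> emeasure lborel N" by (intro emeasure_mono) auto
  then show False using N by (auto dest: null_setsD1)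
qed

lemma analytic:
  fixes h :: "'a::euclidean_space \<Rightarrow> 'a \<Rightarrow> real" and \<delta> :: "'a \<Rightarrow> 'a \<Rightarrow> real" and \<xi> :: 'a
    and f g :: "'a \<Rightarrow> real"
  assumes hm: "(\<lambda>(x, y). h x y) \<in> borel_measurable (borel \<Otimes>\<^sub>M borel)"
    and comp: "vr_comparable h \<xi> \<delta>"
    and fn: "\<And>x. 0 \<le> f x" and gn: "\<And>x. 0 \<le> g x"
    and fm: "f \<in> borel_measurable lborel" and gm: "g \<in> borel_measurable lborel"
    and f1: "(\<integral>\<^sup>+x. ennreal (f x) \<partial>lborel) = 1" and g1: "(\<integral>\<^sup>+x. ennreal (g x) \<partial>lborel) = 1"
    and fi: "integrable lborel f" and gi: "integrable lborel g"
    and f_diff: "AE x in lebesgue. lebesgue_differentiable_at h f x"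
    and g_diff: "AE x in lebesgue. lebesgue_differentiable_at h g x"
    and f_osc: "osc_uniformly_bounded h f"
    and g_osc: "osc_uniformly_bounded h g"
    and f_L1: "integrable lebesgue (\<lambda>x. f x * \<delta> x \<xi>)"
    and g_L1: "integrable lebesgue (\<lambda>x. g x * \<delta> x \<xi>)"
    and f2_L1: "integrable lebesgue (\<lambda>x. (f x)\<^sup>2 * \<delta> x \<xi>)"
    and g2_L1: "integrable lebesgue (\<lambda>x. (g x)\<^sup>2 * \<delta> x \<xi>)"
    and E1: "\<And>t. 0 < t \<Longrightarrow> (\<integral>x. f x * Ib h f t x \<partial>lebesgue) = (\<integral>x. f x * Ib h g t x \<partial>lebesgue)"
    and E2: "\<And>t. 0 < t \<Longrightarrow> (\<integral>x. g x * Ib h g t x \<partial>lebesgue) = (\<integral>x. f x * Ib h g t x \<partial>lebesgue)"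
  shows "AE x in lebesgue. f x = g x"
proof -
  from comp obtain \<epsilon>1 c C where e1: "0 < \<epsilon>1" and c0: "0 < c" and C0: "0 < C" and \<delta>pos: "\<And>a b. 0 < \<delta> a b"
    and AEc: "AE x in lebesgue. \<forall>t. 0 < t \<and> t < \<epsilon>1 \<longrightarrow> c * \<delta> x \<xi> \<le> delta_t h t x \<xi> \<and> delta_t h t x \<xi> \<le> C * \<delta> x \<xi>"
    unfolding vr_comparable_def by blast
  from f_osc obtain \<epsilon>f Cf where ef: "0 < \<epsilon>f" and Cf0: "0 < Cf"
    and AEf: "AE x in lebesgue. centered_osc h f x \<epsilon>f < ennreal Cf"
    unfolding osc_uniformly_bounded_def by blast
  from g_osc obtain \<epsilon>g Cg where eg: "0 < \<epsilon>g" and Cg0: "0 < Cg"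
    and AEg: "AE x in lebesgue. centered_osc h g x \<epsilon>g < ennreal Cg"
    unfolding osc_uniformly_bounded_def by blast
  define \<epsilon>0 where "\<epsilon>0 = min \<epsilon>1 (min \<epsilon>f \<epsilon>g)"
  have e0: "0 < \<epsilon>0" using e1 ef eg by (simp add: \<epsilon>0_def)
  define P where "P t = enn2real (Phi h \<xi> t)" for t
  define \<phi> where "\<phi> t x = enn2real (Phi h x t)" for t x
  have dt: "\<And>t x. delta_t h t x \<xi> = \<phi> t x / P t" unfolding delta_t_def \<phi>_def P_def by simp
  have Ppos: "0 < P t" if "0 < t" "t < \<epsilon>1" for t
  proof (rule ccontr)
    assume "\<not> 0 < P t"
    moreover have "0 \<le> P t" by (simp add: P_def)
    ultimately have P0: "P t = 0" by linarith
    have nc: "\<not> (c * \<delta> x \<xi> \<le> delta_t h t x \<xi>)" for x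
      using P0 dt c0 \<delta>pos[of x \<xi>] by (simp add: not_le)
    have "AE x in (lebesgue::'a measure). False"
      using AEc by (rule eventually_mono) (use nc that in blast)
    then show False using AE_False_lebesgue by blast
  qed
  have AEG: "AE x in lebesgue. (\<forall>t. 0 < t \<and> t < \<epsilon>0 \<longrightarrow> c * \<delta> x \<xi> \<le> delta_t h t x \<xi> \<and> delta_t h t x \<xi> \<le> C * \<delta> x \<xi>
       \<and> ball_mean_dev h f x t < ennreal Cf \<and> ball_mean_dev h g x t < ennreal Cg)
     \<and> ((\<lambda>t. ball_mean_dev h f x t) \<longlongrightarrow> 0) (at_right 0) \<and> ((\<lambda>t. ball_mean_dev h g x t) \<longlongrightarrow> 0) (at_right 0)"
    using AEc AEf AEg f_diff g_diff
  proof eventually_elim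
    case (elim x)
    have "ball_mean_dev h f x t < ennreal Cf" if "0 < t" "t < \<epsilon>f" for t
    proof -
      have "ball_mean_dev h f x t \<le> centered_osc h f x \<epsilon>f" unfolding centered_osc_def
        using that by (intro SUP_upper) auto
      then show ?thesis using elim by (meson le_less_trans)
    qed
    moreover have "ball_mean_dev h g x t < ennreal Cg" if "0 < t" "t < \<epsilon>g" for t
    proof -
      have "ball_mean_dev h g x t \<le> centered_osc h g x \<epsilon>g" unfolding centered_osc_def
        using that by (intro SUP_upper) auto
      then show ?thesis using elim by (meson le_less_trans)
    qed
    ultimately show ?case using elim unfolding lebesgue_differentiable_at_def \<epsilon>0_def by auto
  qed

  have fml[measurable]: "f \<in> borel_measurable lebesgue" using fm by (rule measurable_completion)
  have gml[measurable]: "g \<in> borel_measurable lebesgue" using gm by (rule measurable_completion)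
  have Ibf[measurable]: "Ib h f t \<in> borel_measurable lebesgue" for t
    using Ib_meas[OF hm fm] by (rule measurable_completion)
  have Ibg[measurable]: "Ib h g t \<in> borel_measurable lebesgue" for t
    using Ib_meas[OF hm gm] by (rule measurable_completion)
  have \<phi>m[measurable]: "\<phi> t \<in> borel_measurable lebesgue" for t
  proof -
    have "(\<lambda>x. Phi h x t) \<in> borel_measurable lebesgue"
      using Phi_meas[OF hm] by (rule measurable_completion)
    then show ?thesis unfolding \<phi>_def by measurable
  qed
  have fil: "integrable lebesgue f" using fi fm by (simp add: integrable_completion)
  have gil: "integrable lebesgue g" using gi gm by (simp add: integrable_completion)
  have intpq: "integrable lebesgue (\<lambda>x. p x * Ib h q t x)"
    if pil: "integrable lebesgue p" and pml: "p \<in> borel_measurable lebesgue" and pn: "\<And>x. 0 \<le> p x"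
      and q1: "(\<integral>\<^sup>+x. ennreal (q x) \<partial>lborel) = 1" and qml: "Ib h q t \<in> borel_measurable lebesgue" for p q t
    using pil
  proof (rule Bochner_Integration.integrable_bound)
    show "(\<lambda>x. p x * Ib h q t x) \<in> borel_measurable lebesgue" using pml qml by measurable
    show "AE x in lebesgue. norm (p x * Ib h q t x) \<le> norm (p x)"
      using Ib_bound(3,4)[OF q1] pn by (auto intro!: AE_I2 simp: abs_mult mult_left_le)
  qed
  define R1 where "R1 t x = Ib h f t x - \<phi> t x * f x" for t x
  define R2 where "R2 t x = Ib h g t x - \<phi> t x * g x" for t x
  define Et where "Et t x = f x * R1 t x + g x * R2 t x - 2 * f x * R2 t x" for t x
  define Gt where "Gt t x = \<bar>Et t x\<bar> / P t" for t x
  define W where "W x = C * (Cf + 2 * Cg) * (f x * \<delta> x \<xi>) + C * Cg * (g x * \<delta> x \<xi>)" for x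
  define b1 where "b1 t x = enn2real (ball_mean_dev h f x t)" for t x
  define b2 where "b2 t x = enn2real (ball_mean_dev h g x t)" for t x
  have Gtm[measurable]: "Gt t \<in> borel_measurable lebesgue" for t
    unfolding Gt_def[abs_def] Et_def R1_def R2_def by measurable
  have Wi: "integrable lebesgue W" unfolding W_def[abs_def]
    using f_L1 g_L1 by (intro Bochner_Integration.integrable_add integrable_mult_right)
  have key: "c * \<delta> x \<xi> \<le> \<phi> t x / P t \<and> \<phi> t x / P t \<le> C * \<delta> x \<xi> \<and> 0 < \<phi> t x
     \<and> b1 t x \<le> Cf \<and> b2 t x \<le> Cg
     \<and> Gt t x \<le> C * \<delta> x \<xi> * (f x * b1 t x + g x * b2 t x + 2 * f x * b2 t x)"
    if Gx: "\<forall>t. 0 < t \<and> t < \<epsilon>0 \<longrightarrow> c * \<delta> x \<xi> \<le> delta_t h t x \<xi> \<and> delta_t h t x \<xi> \<le> C * \<delta> x \<xi>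
       \<and> ball_mean_dev h f x t < ennreal Cf \<and> ball_mean_dev h g x t < ennreal Cg"
      and t: "0 < t" "t < \<epsilon>0" for t x
  proof -
    have P0: "0 < P t" using Ppos t by (simp add: \<epsilon>0_def)
    from Gx t have d1: "c * \<delta> x \<xi> \<le> \<phi> t x / P t" and d2: "\<phi> t x / P t \<le> C * \<delta> x \<xi>"
      and bf: "ball_mean_dev h f x t < ennreal Cf" and bg: "ball_mean_dev h g x t < ennreal Cg"
      by (auto simp: dt)
    have "0 < c * \<delta> x \<xi>" using c0 \<delta>pos by simp
    then have "0 < \<phi> t x / P t" using d1 by linarith
    then have \<phi>0: "0 < \<phi> t x" using P0 by (simp add: zero_less_divide_iff)
    then have \<phi>0': "0 < enn2real (Phi h x t)" by (simp add: \<phi>_def)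
    note pf = pw[OF hm fm f1 fn \<phi>0' bf] and pg = pw[OF hm gm g1 gn \<phi>0' bg]
    have r1: "\<bar>R1 t x\<bar> \<le> \<phi> t x * b1 t x" using pf(1) by (simp add: R1_def \<phi>_def b1_def)
    have r2: "\<bar>R2 t x\<bar> \<le> \<phi> t x * b2 t x" using pg(1) by (simp add: R2_def \<phi>_def b2_def)
    have b10: "0 \<le> b1 t x" "0 \<le> b2 t x" by (simp_all add: b1_def b2_def)
    have "\<bar>Et t x\<bar> \<le> f x * \<bar>R1 t x\<bar> + g x * \<bar>R2 t x\<bar> + 2 * f x * \<bar>R2 t x\<bar>"
    proof -
      have e1: "\<bar>f x * R1 t x\<bar> = f x * \<bar>R1 t x\<bar>" "\<bar>g x * R2 t x\<bar> = g x * \<bar>R2 t x\<bar>"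
        "\<bar>2 * f x * R2 t x\<bar> = 2 * f x * \<bar>R2 t x\<bar>"
        using fn[of x] gn[of x] by (simp_all add: abs_mult)
      show ?thesis unfolding Et_def using e1 by linarith
    qed
    also have "\<dots> \<le> f x * (\<phi> t x * b1 t x) + g x * (\<phi> t x * b2 t x) + 2 * f x * (\<phi> t x * b2 t x)"
      using r1 r2 fn[of x] gn[of x] by (intro add_mono mult_left_mono) auto
    also have "\<dots> = \<phi> t x * (f x * b1 t x + g x * b2 t x + 2 * f x * b2 t x)" by (simp add: algebra_simps)
    finally have "Gt t x \<le> (\<phi> t x / P t) * (f x * b1 t x + g x * b2 t x + 2 * f x * b2 t x)"
      unfolding Gt_def using P0 by (simp add: divide_right_mono)
    also have "\<dots> \<le> C * \<delta> x \<xi> * (f x * b1 t x + g x * b2 t x + 2 * f x * b2 t x)"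
      using d2 b10 fn[of x] gn[of x] by (intro mult_right_mono) auto
    finally show ?thesis using d1 d2 \<phi>0 pf(2) pg(2) by (simp add: b1_def b2_def)
  qed

  define GS where "GS x \<longleftrightarrow> (\<forall>t. 0 < t \<and> t < \<epsilon>0 \<longrightarrow> c * \<delta> x \<xi> \<le> delta_t h t x \<xi> \<and> delta_t h t x \<xi> \<le> C * \<delta> x \<xi>
       \<and> ball_mean_dev h f x t < ennreal Cf \<and> ball_mean_dev h g x t < ennreal Cg)" for x
  have AEGS: "AE x in lebesgue. GS x" using AEG unfolding GS_def by (rule eventually_mono) blast
  have main: "integrable lebesgue (\<lambda>x. \<phi> t x / P t * (f x - g x)\<^sup>2) \<and> integrable lebesgue (Gt t) \<and>
     (\<integral>x. \<phi> t x / P t * (f x - g x)\<^sup>2 \<partial>lebesgue) \<le> (\<integral>x. Gt t x \<partial>lebesgue)"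
    if t: "0 < t" "t < \<epsilon>0" for t
  proof -
    have P0: "0 < P t" using Ppos t by (simp add: \<epsilon>0_def)
    have AEk: "AE x in lebesgue. c * \<delta> x \<xi> \<le> \<phi> t x / P t \<and> \<phi> t x / P t \<le> C * \<delta> x \<xi> \<and> 0 < \<phi> t x
     \<and> b1 t x \<le> Cf \<and> b2 t x \<le> Cg
     \<and> Gt t x \<le> C * \<delta> x \<xi> * (f x * b1 t x + g x * b2 t x + 2 * f x * b2 t x)"
      using AEGS by (rule eventually_mono) (rule key[OF _ t], simp add: GS_def)
    have intG: "integrable lebesgue (Gt t)"
      using Wi
    proof (rule Bochner_Integration.integrable_bound)
      show "Gt t \<in> borel_measurable lebesgue" by simp
      show "AE x in lebesgue. norm (Gt t x) \<le> norm (W x)"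
        using AEk
      proof (rule eventually_mono)
        fix x assume k: "c * \<delta> x \<xi> \<le> \<phi> t x / P t \<and> \<phi> t x / P t \<le> C * \<delta> x \<xi> \<and> 0 < \<phi> t x
          \<and> b1 t x \<le> Cf \<and> b2 t x \<le> Cg
          \<and> Gt t x \<le> C * \<delta> x \<xi> * (f x * b1 t x + g x * b2 t x + 2 * f x * b2 t x)"
        have b10: "0 \<le> b1 t x" "0 \<le> b2 t x" by (simp_all add: b1_def b2_def)
        have G0: "0 \<le> Gt t x" unfolding Gt_def using P0 by simp
        have "f x * b1 t x + g x * b2 t x + 2 * f x * b2 t x \<le> f x * Cf + g x * Cg + 2 * f x * Cg"
          using k fn[of x] gn[of x] by (intro add_mono mult_left_mono) auto
        then have "C * \<delta> x \<xi> * (f x * b1 t x + g x * b2 t x + 2 * f x * b2 t x) \<le> C * \<delta> x \<xi> * (f x * Cf + g x * Cg + 2 * f x * Cg)"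
          using C0 \<delta>pos[of x \<xi>] by (intro mult_left_mono) auto
        also have "\<dots> = W x" by (simp add: W_def algebra_simps)
        finally have "Gt t x \<le> W x" using k by linarith
        then show "norm (Gt t x) \<le> norm (W x)" using G0 by simp
      qed
    qed
    have intD: "integrable lebesgue (\<lambda>x. \<phi> t x / P t * (f x - g x)\<^sup>2)"
      using Bochner_Integration.integrable_add[OF integrable_mult_right[OF f2_L1, of C] integrable_mult_right[OF g2_L1, of C]]
    proof (rule Bochner_Integration.integrable_bound)
      show "(\<lambda>x. \<phi> t x / P t * (f x - g x)\<^sup>2) \<in> borel_measurable lebesgue" by measurable
      show "AE x in lebesgue. norm (\<phi> t x / P t * (f x - g x)\<^sup>2) \<le> norm (C * ((f x)\<^sup>2 * \<delta> x \<xi>) + C * ((g x)\<^sup>2 * \<delta> x \<xi>))"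
        using AEk
      proof (rule eventually_mono)
        fix x assume k: "c * \<delta> x \<xi> \<le> \<phi> t x / P t \<and> \<phi> t x / P t \<le> C * \<delta> x \<xi> \<and> 0 < \<phi> t x
          \<and> b1 t x \<le> Cf \<and> b2 t x \<le> Cg
          \<and> Gt t x \<le> C * \<delta> x \<xi> * (f x * b1 t x + g x * b2 t x + 2 * f x * b2 t x)"
        have q0: "0 \<le> \<phi> t x / P t" using k P0 by simp
        have u2: "(f x - g x)\<^sup>2 \<le> (f x)\<^sup>2 + (g x)\<^sup>2" using fn[of x] gn[of x] by (simp add: power2_eq_square algebra_simps)
        have "\<phi> t x / P t * (f x - g x)\<^sup>2 \<le> C * \<delta> x \<xi> * ((f x)\<^sup>2 + (g x)\<^sup>2)"
          using k q0 u2 by (intro mult_mono) auto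
        moreover have "0 \<le> \<phi> t x / P t * (f x - g x)\<^sup>2" using q0 by (intro mult_nonneg_nonneg) auto
        moreover have "0 \<le> C * ((f x)\<^sup>2 * \<delta> x \<xi>) + C * ((g x)\<^sup>2 * \<delta> x \<xi>)"
          using C0 \<delta>pos[of x \<xi>] by simp
        ultimately show "norm (\<phi> t x / P t * (f x - g x)\<^sup>2) \<le> norm (C * ((f x)\<^sup>2 * \<delta> x \<xi>) + C * ((g x)\<^sup>2 * \<delta> x \<xi>))"
          by (simp add: algebra_simps)
      qed
    qed
    have intE: "integrable lebesgue (Et t)"
      using integrable_mult_right[OF intG, of "P t"]
    proof (rule Bochner_Integration.integrable_bound)
      show "Et t \<in> borel_measurable lebesgue" unfolding Et_def[abs_def] R1_def R2_def by measurable
      show "AE x in lebesgue. norm (Et t x) \<le> norm (P t * Gt t x)"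
        using P0 by (intro AE_I2) (simp add: Gt_def)
    qed
    define F where "F x = f x * Ib h f t x + g x * Ib h g t x - 2 * (f x * Ib h g t x)" for x
    have iff: "integrable lebesgue (\<lambda>x. f x * Ib h f t x)" by (rule intpq[OF fil fml fn f1 Ibf])
    have igg: "integrable lebesgue (\<lambda>x. g x * Ib h g t x)" by (rule intpq[OF gil gml gn g1 Ibg])
    have ifg: "integrable lebesgue (\<lambda>x. f x * Ib h g t x)" by (rule intpq[OF fil fml fn g1 Ibg])
    have intF: "integrable lebesgue F" unfolding F_def[abs_def] using iff igg ifg by auto
    have F0: "(\<integral>x. F x \<partial>lebesgue) = 0" unfolding F_def[abs_def]
      using iff igg ifg E1[OF t(1)] E2[OF t(1)] by simp
    have pt0: "\<phi> t x * (f x - g x)\<^sup>2 = F x - Et t x" for x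
      by (simp add: F_def Et_def R1_def R2_def power2_eq_square algebra_simps)
    have pt: "\<phi> t x / P t * (f x - g x)\<^sup>2 = (F x - Et t x) / P t" for x
      by (simp add: pt0[symmetric])
    have "(\<integral>x. \<phi> t x / P t * (f x - g x)\<^sup>2 \<partial>lebesgue) = (\<integral>x. (F x - Et t x) \<partial>lebesgue) / P t"
      unfolding pt by simp
    also have "\<dots> = - (\<integral>x. Et t x \<partial>lebesgue) / P t"
      using intF intE F0 by simp
    also have "\<dots> \<le> (\<integral>x. \<bar>Et t x\<bar> \<partial>lebesgue) / P t"
    proof -
      have "norm (\<integral>x. Et t x \<partial>lebesgue) \<le> (\<integral>x. norm (Et t x) \<partial>lebesgue)" by (rule integral_norm_bound)
      then have "\<bar>\<integral>x. Et t x \<partial>lebesgue\<bar> \<le> (\<integral>x. \<bar>Et t x\<bar> \<partial>lebesgue)" by (simp only: real_norm_def)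
      then have "- (\<integral>x. Et t x \<partial>lebesgue) \<le> (\<integral>x. \<bar>Et t x\<bar> \<partial>lebesgue)" by linarith
      then show ?thesis using P0 by (intro divide_right_mono) auto
    qed
    also have "\<dots> = (\<integral>x. Gt t x \<partial>lebesgue)" unfolding Gt_def by simp
    finally show ?thesis using intG intD by blast
  qed

  have GW: "AE x in lebesgue. norm (Gt t x) \<le> W x" if t: "0 < t" "t < \<epsilon>0" for t
  proof -
    have P0: "0 < P t" using Ppos t by (simp add: \<epsilon>0_def)
    show ?thesis
      using AEGS
    proof (rule eventually_mono)
      fix x assume "GS x"
      then have k: "c * \<delta> x \<xi> \<le> \<phi> t x / P t \<and> \<phi> t x / P t \<le> C * \<delta> x \<xi> \<and> 0 < \<phi> t x
          \<and> b1 t x \<le> Cf \<and> b2 t x \<le> Cg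
          \<and> Gt t x \<le> C * \<delta> x \<xi> * (f x * b1 t x + g x * b2 t x + 2 * f x * b2 t x)"
        by (intro key[OF _ t]) (simp add: GS_def)
      have G0: "0 \<le> Gt t x" unfolding Gt_def using P0 by simp
      have "f x * b1 t x + g x * b2 t x + 2 * f x * b2 t x \<le> f x * Cf + g x * Cg + 2 * f x * Cg"
        using k fn[of x] gn[of x] by (intro add_mono mult_left_mono) auto
      then have "C * \<delta> x \<xi> * (f x * b1 t x + g x * b2 t x + 2 * f x * b2 t x) \<le> C * \<delta> x \<xi> * (f x * Cf + g x * Cg + 2 * f x * Cg)"
        using C0 \<delta>pos[of x \<xi>] by (intro mult_left_mono) auto
      also have "\<dots> = W x" by (simp add: W_def algebra_simps)
      finally show "norm (Gt t x) \<le> W x" using k G0 by simp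
    qed
  qed
  define tn where "tn n = \<epsilon>0 / real (Suc (Suc n))" for n
  have tn0: "0 < tn n" for n unfolding tn_def using e0 by simp
  have tn1: "tn n < \<epsilon>0" for n unfolding tn_def using e0 by (simp add: divide_less_eq)
  have tn_lim: "filterlim tn (at_right 0) sequentially"
  proof (rule tendsto_imp_filterlim_at_right)
    have "(\<lambda>n. \<epsilon>0 / of_nat n) \<longlonglongrightarrow> 0" by (rule lim_const_over_n)
    then have "(\<lambda>n. \<epsilon>0 / of_nat (Suc (Suc n))) \<longlonglongrightarrow> 0" by (intro LIMSEQ_Suc)
    then show "tn \<longlonglongrightarrow> 0" unfolding tn_def by simp
    show "\<forall>\<^sub>F n in sequentially. 0 < tn n" using tn0 by simp
  qed
  have lim: "(\<lambda>n. \<integral>x. Gt (tn n) x \<partial>lebesgue) \<longlonglongrightarrow> (\<integral>x. 0 \<partial>(lebesgue::'a measure))"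
  proof (rule Bochner_Integration.integral_dominated_convergence[where f="\<lambda>x. 0" and s="\<lambda>n. Gt (tn n)" and w=W and M=lebesgue])
    show "(\<lambda>x. 0::real) \<in> borel_measurable lebesgue" by simp
    show "\<And>n. Gt (tn n) \<in> borel_measurable lebesgue" by simp
    show "integrable lebesgue W" by (rule Wi)
    show "\<And>n. AE x in lebesgue. norm (Gt (tn n) x) \<le> W x" using GW tn0 tn1 by blast
    show "AE x in lebesgue. (\<lambda>n. Gt (tn n) x) \<longlonglongrightarrow> 0"
      using AEG
    proof (rule eventually_mono)
      fix x assume Gx: "(\<forall>t. 0 < t \<and> t < \<epsilon>0 \<longrightarrow> c * \<delta> x \<xi> \<le> delta_t h t x \<xi> \<and> delta_t h t x \<xi> \<le> C * \<delta> x \<xi>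
       \<and> ball_mean_dev h f x t < ennreal Cf \<and> ball_mean_dev h g x t < ennreal Cg)
     \<and> ((\<lambda>t. ball_mean_dev h f x t) \<longlongrightarrow> 0) (at_right 0) \<and> ((\<lambda>t. ball_mean_dev h g x t) \<longlongrightarrow> 0) (at_right 0)"
      have k: "0 \<le> Gt (tn n) x \<and> Gt (tn n) x \<le> C * \<delta> x \<xi> * (f x * b1 (tn n) x + g x * b2 (tn n) x + 2 * f x * b2 (tn n) x)" for n
      proof -
        have "Gt (tn n) x \<le> C * \<delta> x \<xi> * (f x * b1 (tn n) x + g x * b2 (tn n) x + 2 * f x * b2 (tn n) x)"
          using key[OF _ tn0 tn1, of x n] Gx by blast
        moreover have "0 \<le> Gt (tn n) x" unfolding Gt_def using Ppos[OF tn0, of n] tn1[of n] by (simp add: \<epsilon>0_def)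
        ultimately show ?thesis by blast
      qed
      have l1: "(\<lambda>n. b1 (tn n) x) \<longlonglongrightarrow> 0"
      proof -
        have "(\<lambda>n. ball_mean_dev h f x (tn n)) \<longlonglongrightarrow> 0"
          using filterlim_compose[OF _ tn_lim] Gx by blast
        then have "(\<lambda>n. enn2real (ball_mean_dev h f x (tn n))) \<longlonglongrightarrow> 0"
          by (intro tendsto_enn2real) simp_all
        then show ?thesis by (simp add: b1_def)
      qed
      have l2: "(\<lambda>n. b2 (tn n) x) \<longlonglongrightarrow> 0"
      proof -
        have "(\<lambda>n. ball_mean_dev h g x (tn n)) \<longlonglongrightarrow> 0"
          using filterlim_compose[OF _ tn_lim] Gx by blast
        then have "(\<lambda>n. enn2real (ball_mean_dev h g x (tn n))) \<longlonglongrightarrow> 0"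
          by (intro tendsto_enn2real) simp_all
        then show ?thesis by (simp add: b2_def)
      qed
      have "(\<lambda>n. C * \<delta> x \<xi> * (f x * b1 (tn n) x + g x * b2 (tn n) x + 2 * f x * b2 (tn n) x))
          \<longlonglongrightarrow> C * \<delta> x \<xi> * (f x * 0 + g x * 0 + 2 * f x * 0)"
        by (intro tendsto_intros l1 l2)
      then have up: "(\<lambda>n. C * \<delta> x \<xi> * (f x * b1 (tn n) x + g x * b2 (tn n) x + 2 * f x * b2 (tn n) x)) \<longlonglongrightarrow> 0"
        by simp
      show "(\<lambda>n. Gt (tn n) x) \<longlonglongrightarrow> 0"
        by (rule tendsto_sandwich[OF _ _ tendsto_const up]) (use k in auto)
    qed
  qed
  define s where "s = tn 0"
  have s0: "0 < s" "s < \<epsilon>0" using tn0 tn1 by (simp_all add: s_def)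
  define I where "I = (\<integral>x. \<phi> s x / P s * (f x - g x)\<^sup>2 \<partial>lebesgue)"
  have Ps: "0 < P s" using Ppos s0 by (simp add: \<epsilon>0_def)
  have AEs: "AE x in lebesgue. c * \<delta> x \<xi> \<le> \<phi> s x / P s \<and> \<phi> s x / P s \<le> C * \<delta> x \<xi> \<and> 0 < \<phi> s x"
    using AEGS by (rule eventually_mono) (use key[OF _ s0] in \<open>simp add: GS_def\<close>)
  have low: "c / C * I \<le> (\<integral>x. Gt (tn n) x \<partial>lebesgue)" for n
  proof -
    note ms = main[OF s0] and mn = main[OF tn0 tn1, of n]
    have "c / C * I = (\<integral>x. c / C * (\<phi> s x / P s * (f x - g x)\<^sup>2) \<partial>lebesgue)" unfolding I_def by simp
    also have "\<dots> \<le> (\<integral>x. \<phi> (tn n) x / P (tn n) * (f x - g x)\<^sup>2 \<partial>lebesgue)"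
    proof (rule integral_mono_AE)
      show "integrable lebesgue (\<lambda>x. c / C * (\<phi> s x / P s * (f x - g x)\<^sup>2))"
        using ms by (intro integrable_mult_right) blast
      show "integrable lebesgue (\<lambda>x. \<phi> (tn n) x / P (tn n) * (f x - g x)\<^sup>2)" using mn by simp
      show "AE x in lebesgue. c / C * (\<phi> s x / P s * (f x - g x)\<^sup>2) \<le> \<phi> (tn n) x / P (tn n) * (f x - g x)\<^sup>2"
        using AEGS
      proof (rule eventually_mono)
        fix x assume "GS x"
        then have k1: "\<phi> s x / P s \<le> C * \<delta> x \<xi>" and k2: "c * \<delta> x \<xi> \<le> \<phi> (tn n) x / P (tn n)"
          using key[OF _ s0, of x] key[OF _ tn0 tn1, of x n] by (auto simp: GS_def)
        have "c / C * (\<phi> s x / P s) \<le> c / C * (C * \<delta> x \<xi>)" using k1 c0 C0 by (intro mult_left_mono) auto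
        also have "\<dots> = c * \<delta> x \<xi>" using C0 by simp
        finally have "c / C * (\<phi> s x / P s) \<le> \<phi> (tn n) x / P (tn n)" using k2 by linarith
        then show "c / C * (\<phi> s x / P s * (f x - g x)\<^sup>2) \<le> \<phi> (tn n) x / P (tn n) * (f x - g x)\<^sup>2"
          by (metis mult.assoc mult_right_mono zero_le_power2)
      qed
    qed
    also have "\<dots> \<le> (\<integral>x. Gt (tn n) x \<partial>lebesgue)" using mn by blast
    finally show ?thesis .
  qed
  have "c / C * I \<le> (\<integral>x. 0 \<partial>(lebesgue::'a measure))"
    using lim by (rule LIMSEQ_le_const) (use low in blast)
  then have "c / C * I \<le> 0" by simp
  then have I0: "I \<le> 0" using c0 C0 by (simp add: mult_le_0_iff divide_le_0_iff)
  have AEnn: "AE x in lebesgue. 0 \<le> \<phi> s x / P s * (f x - g x)\<^sup>2"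
    using AEs by (rule eventually_mono) (use Ps in simp)
  have "I = 0" using I0 integral_nonneg_AE[OF AEnn] unfolding I_def by linarith
  then have "AE x in lebesgue. \<phi> s x / P s * (f x - g x)\<^sup>2 = 0"
    unfolding I_def using integral_nonneg_eq_0_iff_AE[OF conjunct1[OF main[OF s0]] AEnn] by simp
  then show ?thesis using AEs
    by eventually_elim (use Ps in simp)
qed



lemma distr_h_pair:
  fixes X Y :: "'p \<Rightarrow> 'a::euclidean_space" and h :: "'a \<Rightarrow> 'a \<Rightarrow> real"
  assumes hm: "(\<lambda>(x, y). h x y) \<in> borel_measurable (borel \<Otimes>\<^sub>M borel)"
    and Xm: "X \<in> measurable M lborel" and Ym: "Y \<in> measurable M lborel"
  shows "distr M borel (\<lambda>\<omega>. h (X \<omega>) (Y \<omega>)) = distr (distr M (lborel \<Otimes>\<^sub>M lborel) (\<lambda>\<omega>. (X \<omega>, Y \<omega>))) borel (\<lambda>(x, y). h x y)"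
proof -
  have "(\<lambda>\<omega>. (X \<omega>, Y \<omega>)) \<in> measurable M (lborel \<Otimes>\<^sub>M lborel)" using Xm Ym by (rule measurable_Pair)
  then show ?thesis using hmeas_l[OF hm] by (subst distr_distr) (auto simp: comp_def)
qed

lemma measure_h_pair:
  fixes X Y :: "'p \<Rightarrow> 'a::euclidean_space" and h :: "'a \<Rightarrow> 'a \<Rightarrow> real"
  assumes hm: "(\<lambda>(x, y). h x y) \<in> borel_measurable (borel \<Otimes>\<^sub>M borel)"
    and Xm: "X \<in> measurable M lborel" and Ym: "Y \<in> measurable M lborel"
  shows "measure M {\<omega> \<in> space M. h (X \<omega>) (Y \<omega>) < t} = measure (distr M borel (\<lambda>\<omega>. h (X \<omega>) (Y \<omega>))) {..<t}"
proof -
  have pm: "(\<lambda>\<omega>. (X \<omega>, Y \<omega>)) \<in> measurable M (lborel \<Otimes>\<^sub>M lborel)" using Xm Ym by (rule measurable_Pair)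
  have "(\<lambda>(x,y). h x y) \<circ> (\<lambda>\<omega>. (X \<omega>, Y \<omega>)) \<in> borel_measurable M"
    by (rule measurable_comp[OF pm hmeas_l[OF hm]])
  then have "(\<lambda>\<omega>. h (X \<omega>) (Y \<omega>)) \<in> borel_measurable M" by (simp add: comp_def)
  have "{..<t} \<in> sets (borel::real measure)" by (simp add: borel_open)
  then show ?thesis using \<open>(\<lambda>\<omega>. h (X \<omega>) (Y \<omega>)) \<in> borel_measurable M\<close> by (subst measure_distr) (auto simp: vimage_def Int_def conj_commute intro!: arg_cong[where f="measure M"])
qed

theorem theorem3:
  fixes h :: "'a::euclidean_space \<Rightarrow> 'a \<Rightarrow> real"
    and \<delta> :: "'a \<Rightarrow> 'a \<Rightarrow> real"
    and \<xi> :: 'a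
    and M :: "'p measure"
    and X Y :: "nat \<Rightarrow> 'p \<Rightarrow> 'a"
    and f g :: "'a \<Rightarrow> real"
  assumes vr: "volume_regular h"
    and comp: "vr_comparable h \<xi> \<delta>"
    and h_meas: "(\<lambda>(x, y). h x y) \<in> borel_measurable (borel \<Otimes>\<^sub>M borel)"
    and ps: "prob_space M"
    and f_nonneg: "\<And>x. 0 \<le> f x" and g_nonneg: "\<And>x. 0 \<le> g x"
    and X_distr: "\<And>i. i \<in> {1,2,3} \<Longrightarrow> distributed M lborel (X i) (\<lambda>x. ennreal (f x))"
    and Y_distr: "\<And>i. i \<in> {1,2,3} \<Longrightarrow> distributed M lborel (Y i) (\<lambda>x. ennreal (g x))"
    and X_indep: "prob_space.indep_vars M (\<lambda>_. borel) X {1,2,3}"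
    and Y_indep: "prob_space.indep_vars M (\<lambda>_. borel) Y {1,2,3}"
    and XY_indep: "\<And>i j. i \<in> {1,2,3} \<Longrightarrow> j \<in> {1,2,3} \<Longrightarrow>
                     prob_space.indep_var M borel (X i) borel (Y j)"
    and f_diff: "AE x in lebesgue. lebesgue_differentiable_at h f x"
    and g_diff: "AE x in lebesgue. lebesgue_differentiable_at h g x"
    and f_osc: "osc_uniformly_bounded h f"
    and g_osc: "osc_uniformly_bounded h g"
    and f_L1: "integrable lebesgue (\<lambda>x. f x * \<delta> x \<xi>)"
    and g_L1: "integrable lebesgue (\<lambda>x. g x * \<delta> x \<xi>)"
    and f2_L1: "integrable lebesgue (\<lambda>x. (f x)\<^sup>2 * \<delta> x \<xi>)"
    and g2_L1: "integrable lebesgue (\<lambda>x. (g x)\<^sup>2 * \<delta> x \<xi>)"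
  shows "(AE x in lebesgue. f x = g x) \<longleftrightarrow>
           (distr M borel (\<lambda>\<omega>. h (X 1 \<omega>) (X 2 \<omega>)) = distr M borel (\<lambda>\<omega>. h (Y 1 \<omega>) (Y 2 \<omega>)) \<and>
            distr M borel (\<lambda>\<omega>. h (Y 1 \<omega>) (Y 2 \<omega>)) = distr M borel (\<lambda>\<omega>. h (X 3 \<omega>) (Y 3 \<omega>)))"
proof -
  have X1: "distributed M lborel (X 1) (\<lambda>x. ennreal (f x))" by (rule X_distr) simp
  have X2: "distributed M lborel (X 2) (\<lambda>x. ennreal (f x))" by (rule X_distr) simp
  have X3: "distributed M lborel (X 3) (\<lambda>x. ennreal (f x))" by (rule X_distr) simp
  have Y1: "distributed M lborel (Y 1) (\<lambda>x. ennreal (g x))" by (rule Y_distr) simp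
  have Y2: "distributed M lborel (Y 2) (\<lambda>x. ennreal (g x))" by (rule Y_distr) simp
  have Y3: "distributed M lborel (Y 3) (\<lambda>x. ennreal (g x))" by (rule Y_distr) simp
  have iX: "prob_space.indep_var M borel (X 1) borel (X 2)" by (rule indep_pair[OF ps X_indep]) auto
  have iY: "prob_space.indep_var M borel (Y 1) borel (Y 2)" by (rule indep_pair[OF ps Y_indep]) auto
  have iXY: "prob_space.indep_var M borel (X 3) borel (Y 3)" by (rule XY_indep) auto
  have Xm: "X i \<in> measurable M lborel" if "i \<in> {1,2,3}" for i
    using X_distr[OF that] by (simp add: distributed_def)
  have Ym: "Y i \<in> measurable M lborel" if "i \<in> {1,2,3}" for i
    using Y_distr[OF that] by (simp add: distributed_def)
  note fm = dens(1)[OF ps X1 f_nonneg] and f1 = dens(2)[OF ps X1 f_nonneg] and fi = dens(3)[OF ps X1 f_nonneg]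
  note gm = dens(1)[OF ps Y1 g_nonneg] and g1 = dens(2)[OF ps Y1 g_nonneg] and gi = dens(3)[OF ps Y1 g_nonneg]
  show ?thesis
  proof
    assume "AE x in lebesgue. f x = g x"
    then have "AE x in lborel. f x = g x" by (rule AE_completion_rev)
    then have ae: "AE x in lborel. ennreal (f x) = ennreal (g x)"
      by (auto elim: eventually_mono)
    have fgm: "(\<lambda>x. ennreal (f x)) \<in> borel_measurable lborel" "(\<lambda>x. ennreal (g x)) \<in> borel_measurable lborel"
      using fm gm by (auto intro: measurable_compose[OF _ measurable_ennreal])
    have X1': "distributed M lborel (X 1) (\<lambda>x. ennreal (g x))"
      by (rule iffD1[OF distributed_cong_density[OF ae fgm(2) fgm(1)] X1])
    have X2': "distributed M lborel (X 2) (\<lambda>x. ennreal (g x))"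
      by (rule iffD1[OF distributed_cong_density[OF ae fgm(2) fgm(1)] X2])
    have X3': "distributed M lborel (X 3) (\<lambda>x. ennreal (g x))"
      by (rule iffD1[OF distributed_cong_density[OF ae fgm(2) fgm(1)] X3])
    have j1: "distr M (lborel \<Otimes>\<^sub>M lborel) (\<lambda>\<omega>. (X 1 \<omega>, X 2 \<omega>)) = density (lborel \<Otimes>\<^sub>M lborel) (\<lambda>(x,y). ennreal (g x) * ennreal (g y))"
      by (rule joint_distr[OF ps X1' X2' iX])
    have j2: "distr M (lborel \<Otimes>\<^sub>M lborel) (\<lambda>\<omega>. (Y 1 \<omega>, Y 2 \<omega>)) = density (lborel \<Otimes>\<^sub>M lborel) (\<lambda>(x,y). ennreal (g x) * ennreal (g y))"
      by (rule joint_distr[OF ps Y1 Y2 iY])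
    have j3: "distr M (lborel \<Otimes>\<^sub>M lborel) (\<lambda>\<omega>. (X 3 \<omega>, Y 3 \<omega>)) = density (lborel \<Otimes>\<^sub>M lborel) (\<lambda>(x,y). ennreal (g x) * ennreal (g y))"
      by (rule joint_distr[OF ps X3' Y3 iXY])
    show "distr M borel (\<lambda>\<omega>. h (X 1 \<omega>) (X 2 \<omega>)) = distr M borel (\<lambda>\<omega>. h (Y 1 \<omega>) (Y 2 \<omega>)) \<and>
            distr M borel (\<lambda>\<omega>. h (Y 1 \<omega>) (Y 2 \<omega>)) = distr M borel (\<lambda>\<omega>. h (X 3 \<omega>) (Y 3 \<omega>))"
      using distr_h_pair[OF h_meas Xm[of 1] Xm[of 2]] distr_h_pair[OF h_meas Ym[of 1] Ym[of 2]]
        distr_h_pair[OF h_meas Xm[of 3] Ym[of 3]] j1 j2 j3 by simp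
  next
    assume eq: "distr M borel (\<lambda>\<omega>. h (X 1 \<omega>) (X 2 \<omega>)) = distr M borel (\<lambda>\<omega>. h (Y 1 \<omega>) (Y 2 \<omega>)) \<and>
            distr M borel (\<lambda>\<omega>. h (Y 1 \<omega>) (Y 2 \<omega>)) = distr M borel (\<lambda>\<omega>. h (X 3 \<omega>) (Y 3 \<omega>))"
    have m: "measure M {\<omega> \<in> space M. h (X 1 \<omega>) (X 2 \<omega>) < t} = measure M {\<omega> \<in> space M. h (Y 1 \<omega>) (Y 2 \<omega>) < t}"
      "measure M {\<omega> \<in> space M. h (Y 1 \<omega>) (Y 2 \<omega>) < t} = measure M {\<omega> \<in> space M. h (X 3 \<omega>) (Y 3 \<omega>) < t}" for t
      using measure_h_pair[OF h_meas Xm[of 1] Xm[of 2]] measure_h_pair[OF h_meas Ym[of 1] Ym[of 2]]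
        measure_h_pair[OF h_meas Xm[of 3] Ym[of 3]] eq by simp_all
    note p1 = prob_formula(2)[OF ps X1 X2 iX h_meas f_nonneg f_nonneg]
    note p2 = prob_formula(2)[OF ps Y1 Y2 iY h_meas g_nonneg g_nonneg]
    note p3 = prob_formula(2)[OF ps X3 Y3 iXY h_meas f_nonneg g_nonneg]
    show "AE x in lebesgue. f x = g x"
    proof (rule analytic[OF h_meas comp f_nonneg g_nonneg fm gm f1 g1 fi gi f_diff g_diff f_osc g_osc f_L1 g_L1 f2_L1 g2_L1])
      show "(\<integral>x. f x * Ib h f t x \<partial>lebesgue) = (\<integral>x. f x * Ib h g t x \<partial>lebesgue)" for t
        using p1[of t] p2[of t] p3[of t] m[of t] by simp
      show "(\<integral>x. g x * Ib h g t x \<partial>lebesgue) = (\<integral>x. f x * Ib h g t x \<partial>lebesgue)" for t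
        using p1[of t] p2[of t] p3[of t] m[of t] by simp
    qed
  qed
qed

end
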